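(* Let $\mathcal{G}$ be a simple temporal clique on $n$ vertices and let $\mathcal{T}^+=(V,E^+_T)$ be obtained by the backward construction (for any choice of the arbitrary choices). Then the number of collectors is at most $n/2$.
   Context: A simple temporal clique is a pair $\mathcal{G}=(G,\lambda)$ where $G=(V,E)$ is the complete graph on a finite set $V$ of $n$ vertices and $\lambda:E\to\mathbb{N}$ assigns to each edge a single integer label such that any two distinct edges sharing an endpoint have different labels; the label of an arc $(x,y)$ is $\lambda(\{x,y\})$. For a vertex $v$, $e^+(v)$ is the edge incident to $v$ with largest label. Backward construction: let $E^+$ be the set of arcs $(v,u)$ with $\{u,v\}=e^+(v)$, except that if $e^+(u)=e^+(v)=\{u,v\}$ only one of the two arcs $(u,v),(v,u)$ is included (arbitrarily). Initialize $E^+_T:=E^+$. For every vertex $v$ of in-degree at least $2$ in $(V,E^+)$, let $(u_1,v),\dots,(u_\ell,v)$ be its in-arcs in $E^+$, where $(u_\ell,v)$ has the smallest label; for each $i<\ell$, if $u_i$ has in-degree $0$ in $(V,E^+)$, replace $(u_i,v)$ by $(v,u_i)$ in $E^+_T$, and otherwise remove $(u_i,v)$ from $E^+_T$. Set $\mathcal{T}^+=(V,E^+_T)$. A collector is a vertex of in-degree $0$ in $\mathcal{T}^+$. *)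

theory Defs
  imports Main
begin

definition cedges :: "'a set \<Rightarrow> 'a set set" where
  "cedges V = {{x, y} | x y. x \<in> V \<and> y \<in> V \<and> x \<noteq> y}"

definition simple_temporal_clique :: "'a set \<Rightarrow> ('a set \<Rightarrow> nat) \<Rightarrow> bool" where
  "simple_temporal_clique V lam \<longleftrightarrow> finite V \<and>
     (\<forall>e \<in> cedges V. \<forall>f \<in> cedges V. e \<noteq> f \<and> e \<inter> f \<noteq> {} \<longrightarrow> lam e \<noteq> lam f)"

definition eplus :: "'a set \<Rightarrow> ('a set \<Rightarrow> nat) \<Rightarrow> 'a \<Rightarrow> 'a set" where
  "eplus V lam v = (THE e. e \<in> cedges V \<and> v \<in> e \<and>
      (\<forall>f \<in> cedges V. v \<in> f \<longrightarrow> lam f \<le> lam e))"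

text \<open>Ep is a valid choice of the arc set E^+: it contains the arc (v,u) for
  every v with e^+(v) = {u,v}, except that when e^+(u) = e^+(v) = {u,v} exactly
  one of (u,v), (v,u) is included (the arbitrary choice).\<close>
definition is_Eplus :: "'a set \<Rightarrow> ('a set \<Rightarrow> nat) \<Rightarrow> ('a \<times> 'a) set \<Rightarrow> bool" where
  "is_Eplus V lam Ep \<longleftrightarrow>
     Ep \<subseteq> {(v, u). v \<in> V \<and> u \<in> V \<and> v \<noteq> u \<and> eplus V lam v = {u, v}} \<and>
     (\<forall>v \<in> V. \<forall>u \<in> V. v \<noteq> u \<and> eplus V lam v = {u, v} \<longrightarrow>
        ((v, u) \<in> Ep \<or> (u, v) \<in> Ep) \<and> \<not> ((v, u) \<in> Ep \<and> (u, v) \<in> Ep))"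

definition indeg :: "('a \<times> 'a) set \<Rightarrow> 'a \<Rightarrow> nat" where
  "indeg A v = card {u. (u, v) \<in> A}"

definition min_in_arc :: "('a set \<Rightarrow> nat) \<Rightarrow> ('a \<times> 'a) set \<Rightarrow> 'a \<Rightarrow> 'a \<Rightarrow> bool" where
  "min_in_arc lam Ep u v \<longleftrightarrow> (u, v) \<in> Ep \<and>
     (\<forall>w. (w, v) \<in> Ep \<longrightarrow> lam {u, v} \<le> lam {w, v})"

definition ET :: "('a set \<Rightarrow> nat) \<Rightarrow> ('a \<times> 'a) set \<Rightarrow> ('a \<times> 'a) set" where
  "ET lam Ep =
     {(u, v). (u, v) \<in> Ep \<and> (indeg Ep v < 2 \<or> min_in_arc lam Ep u v)}
     \<union> {(v, u). (u, v) \<in> Ep \<and> indeg Ep v \<ge> 2 \<and> \<not> min_in_arc lam Ep u v \<and> indeg Ep u = 0}"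

definition collectors :: "'a set \<Rightarrow> ('a set \<Rightarrow> nat) \<Rightarrow> ('a \<times> 'a) set \<Rightarrow> 'a set" where
  "collectors V lam Ep = {v \<in> V. indeg (ET lam Ep) v = 0}"

end

theory Submission
  imports Defs
begin

lemma eplus_ex:
  assumes stc: "simple_temporal_clique V lam" and c: "c \<in> V" and u0: "u0 \<in> V" "u0 \<noteq> c"
  shows "\<exists>u\<in>V. u \<noteq> c \<and> eplus V lam c = {u, c}"
proof -
  have fin: "finite V" using stc by (simp add: simple_temporal_clique_def)
  define S where "S = {e \<in> cedges V. c \<in> e}"
  have "cedges V \<subseteq> Pow V" unfolding cedges_def by auto
  hence "S \<subseteq> Pow V" unfolding S_def by blast
  hence finS: "finite S" using fin by (simp add: finite_subset)
  have e0: "{u0, c} \<in> S" unfolding S_def cedges_def using u0 c by blast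
  have "\<exists>e. e \<in> S \<and> (\<forall>y. y \<in> S \<longrightarrow> lam y \<le> lam e)"
  proof (rule ex_has_greatest_nat[where b="Max (lam ` S) + 1"])
    show "{u0, c} \<in> S" by (rule e0)
    show "\<forall>y. y \<in> S \<longrightarrow> lam y < Max (lam ` S) + 1"
      using finS by (simp add: le_imp_less_Suc)
  qed
  then obtain e where eS: "e \<in> S" and emax: "\<forall>y\<in>S. lam y \<le> lam e" by blast
  have uniq: "e' = e" if "e' \<in> cedges V \<and> c \<in> e' \<and> (\<forall>f \<in> cedges V. c \<in> f \<longrightarrow> lam f \<le> lam e')" for e'
  proof (rule ccontr)
    assume ne: "e' \<noteq> e"
    have "lam e \<le> lam e'" using that eS unfolding S_def by blast
    moreover have "lam e' \<le> lam e" using that emax unfolding S_def by blast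
    moreover have "e' \<inter> e \<noteq> {}" using that eS unfolding S_def by blast
    ultimately show False using stc ne that eS unfolding simple_temporal_clique_def S_def by auto
  qed
  have "eplus V lam c = e"
    unfolding eplus_def
  proof (rule the_equality)
    show "e \<in> cedges V \<and> c \<in> e \<and> (\<forall>f\<in>cedges V. c \<in> f \<longrightarrow> lam f \<le> lam e)"
      using eS emax unfolding S_def by blast
  qed (use uniq in blast)
  moreover obtain x y where "e = {x, y}" "x \<in> V" "y \<in> V" "x \<noteq> y" "c \<in> e"
    using eS unfolding S_def cedges_def by blast
  ultimately show ?thesis by (metis insert_commute empty_iff insert_iff)
qed

theorem lemma5:
  fixes V :: "'a set" and lam :: "'a set \<Rightarrow> nat" and Ep :: "('a \<times> 'a) set"
  assumes "simple_temporal_clique V lam"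
    and "card V \<ge> 2"
    and "is_Eplus V lam Ep"
  shows "2 * card (collectors V lam Ep) \<le> card V"
proof -
  note stc = assms(1)
  have fin: "finite V" using stc by (simp add: simple_temporal_clique_def)
  have EpV: "Ep \<subseteq> V \<times> V" using assms(3) unfolding is_Eplus_def by auto
  have ETV: "ET lam Ep \<subseteq> V \<times> V" using EpV unfolding ET_def by auto
  have finin: "finite {u. (u, v) \<in> A}" if "A \<subseteq> V \<times> V" for A v
    using that fin by (metis (no_types, lifting) finite_subset mem_Collect_eq mem_Sigma_iff subsetD subsetI)
  have indeg0: "indeg A v = 0 \<longleftrightarrow> (\<forall>u. (u, v) \<notin> A)" if "A \<subseteq> V \<times> V" for A v
    using finin[OF that, of v] unfolding indeg_def by auto
  define C where "C = collectors V lam Ep"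
  have CV: "C \<subseteq> V" unfolding C_def collectors_def by auto
  have Cin: "\<forall>u. (u, c) \<notin> ET lam Ep" if "c \<in> C" for c
    using that indeg0[OF ETV] unfolding C_def collectors_def by auto
  have noin: "(u, c) \<notin> Ep" if "c \<in> C" for u c
  proof
    assume uc: "(u, c) \<in> Ep"
    show False
    proof (cases "indeg Ep c < 2")
      case True
      then have "(u, c) \<in> ET lam Ep" using uc unfolding ET_def by auto
      then show False using Cin[OF that] by blast
    next
      case False
      obtain w where "(w, c) \<in> Ep" and "\<forall>y. (y, c) \<in> Ep \<longrightarrow> lam {w, c} \<le> lam {y, c}"
        using ex_has_least_nat[of "\<lambda>w. (w, c) \<in> Ep" u "\<lambda>w. lam {w, c}"] uc by blast
      then have "min_in_arc lam Ep w c" unfolding min_in_arc_def by blast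
      then have "(w, c) \<in> ET lam Ep" unfolding ET_def min_in_arc_def by auto
      then show False using Cin[OF that] by blast
    qed
  qed
  have ind0: "indeg Ep c = 0" if "c \<in> C" for c
    using indeg0[OF EpV] noin[OF that] by blast
  have out: "\<exists>w. (c, w) \<in> Ep" if "c \<in> C" for c
  proof -
    have cV: "c \<in> V" using that CV by auto
    have "\<exists>u0\<in>V. u0 \<noteq> c"
    proof (rule ccontr)
      assume "\<not> ?thesis"
      then have "V \<subseteq> {c}" by auto
      then have "card V \<le> 1" using card_mono[of "{c}" V] by simp
      then show False using assms(2) by simp
    qed
    then obtain u where uV: "u \<in> V" and uc: "u \<noteq> c" and ue: "eplus V lam c = {u, c}"
      using eplus_ex[OF stc cV] by blast
    have H: "\<forall>v \<in> V. \<forall>u \<in> V. v \<noteq> u \<and> eplus V lam v = {u, v} \<longrightarrow>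
        ((v, u) \<in> Ep \<or> (u, v) \<in> Ep)" using assms(3) unfolding is_Eplus_def by blast
    have "c \<noteq> u \<and> eplus V lam c = {u, c}" using uc ue by simp
    then have "(c, u) \<in> Ep \<or> (u, c) \<in> Ep" using H cV uV by simp
    then show ?thesis using noin[OF that] by blast
  qed
  define f where "f c = (SOME w. (c, w) \<in> Ep)" for c
  have fEp: "(c, f c) \<in> Ep" if "c \<in> C" for c
    unfolding f_def using out[OF that] by (rule someI_ex)
  have fET: "(c, f c) \<in> ET lam Ep" if "c \<in> C" for c
  proof (rule ccontr)
    assume "(c, f c) \<notin> ET lam Ep"
    then have "indeg Ep (f c) \<ge> 2" "\<not> min_in_arc lam Ep c (f c)"
      using fEp[OF that] unfolding ET_def by auto
    then have "(f c, c) \<in> ET lam Ep" using fEp[OF that] ind0[OF that] unfolding ET_def by auto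
    then show False using Cin[OF that] by blast
  qed
  have fmin: "min_in_arc lam Ep c (f c)" if "c \<in> C" "indeg Ep (f c) \<ge> 2" for c
  proof -
    have "(c, f c) \<in> ET lam Ep" by (rule fET[OF that(1)])
    moreover have "(f c, c) \<notin> Ep" by (rule noin[OF that(1)])
    ultimately show ?thesis using that(2) unfolding ET_def by auto
  qed
  have fimg: "f ` C \<subseteq> V - C"
  proof
    fix w assume "w \<in> f ` C"
    then obtain c where c: "c \<in> C" "w = f c" by blast
    have "w \<in> V" using fEp[OF c(1)] EpV c by auto
    moreover have "w \<notin> C" using Cin fET c by blast
    ultimately show "w \<in> V - C" by blast
  qed
  have finj: "inj_on f C"
  proof
    fix c1 c2 assume c1: "c1 \<in> C" and c2: "c2 \<in> C" and eq: "f c1 = f c2"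
    show "c1 = c2"
    proof (rule ccontr)
      assume ne: "c1 \<noteq> c2"
      define w where "w = f c1"
      have a1: "(c1, w) \<in> Ep" and a2: "(c2, w) \<in> Ep" using fEp[OF c1] fEp[OF c2] eq unfolding w_def by simp_all
      have "{c1, c2} \<subseteq> {u. (u, w) \<in> Ep}" using a1 a2 by auto
      then have "card {c1, c2} \<le> indeg Ep w" unfolding indeg_def
        using card_mono finin[OF EpV] by blast
      then have d: "indeg Ep w \<ge> 2" using ne by simp
      have m1: "min_in_arc lam Ep c1 w" using fmin[OF c1] d w_def by simp
      have m2: "min_in_arc lam Ep c2 w" using fmin[OF c2] d w_def eq by simp
      have "lam {c1, w} = lam {c2, w}" using m1 m2 a1 a2 unfolding min_in_arc_def
        by (meson le_antisym)
      moreover have "{c1, w} \<in> cedges V" "{c2, w} \<in> cedges V"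
        using a1 a2 assms(3) unfolding is_Eplus_def cedges_def by blast+
      moreover have "{c1, w} \<noteq> {c2, w}" using ne by (metis doubleton_eq_iff)
      moreover have "{c1, w} \<inter> {c2, w} \<noteq> {}" by blast
      moreover have "\<forall>e \<in> cedges V. \<forall>f \<in> cedges V. e \<noteq> f \<and> e \<inter> f \<noteq> {} \<longrightarrow> lam e \<noteq> lam f"
        using stc unfolding simple_temporal_clique_def by blast
      ultimately show False by metis
    qed
  qed
  have "card C \<le> card (V - C)"
    using card_inj_on_le[OF finj fimg] fin by blast
  moreover have "card V = card C + card (V - C)"
    using fin CV by (metis card_Diff_subset finite_subset add_diff_inverse_nat card_mono not_less)
  ultimately show ?thesis unfolding C_def by linarith
qed

end
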